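(* Let $X\in\mathcal M_{\mathbf r}$ with minimal left-orthogonal TT decomposition $U_1,\dots,U_d$, and let $V\in\mathrm T_X\mathcal M_{\mathbf r}$ be given by cores $\delta V_1,\dots,\delta V_d$ with $V(i_1,\dots,i_d)=\sum_{k=1}^dU_1(i_1)\cdots U_{k-1}(i_{k-1})\delta V_k(i_k)U_{k+1}(i_{k+1})\cdots U_d(i_d)$ and $(\delta V_k^L)^\top U_k^L=0$ for $k\in[d-1]$. Then there exist $\epsilon>0$ and smooth curves $c_k:(-\epsilon,\epsilon)\to\mathbb R^{r_{k-1}\times n_k\times r_k}$ with $c_k(t)=U_k+t\,\delta V_k+O(t^2)$ for $k\in[d-1]$ and $c_d(t)=U_d+t\,\delta V_d$, such that, setting $c_{TT}(t):=M_{TT}(c_1(t),\dots,c_d(t))$, we have $c_{TT}(0)=X$, $c_{TT}'(0)=V$, and for every $t\in(-\epsilon,\epsilon)$ the cores $c_1(t),\dots,c_d(t)$ form a minimal left-orthogonal TT decomposition and $c_{TT}(t)\in\mathcal M_{\mathbf r}$.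
   Context: Fix $d\ge2$, positive integers $n_1,\dots,n_d$, $\mathbf r=(r_1,\dots,r_{d-1})$, $r_0=r_d=1$. For $Z\in\mathbb R^{n_1\times\cdots\times n_d}$, $Z^{<\mu>}$ is the $(n_1\cdots n_\mu)\times(n_{\mu+1}\cdots n_d)$ flattening (colexicographic order); $\mathrm{rank}_{TT}(Z)=(\mathrm{rank}\,Z^{<1>},\dots,\mathrm{rank}\,Z^{<d-1>})$; $\mathcal M_{\mathbf r}$ is the manifold of tensors of TT-rank $\mathbf r$. $M_{TT}(W_1,\dots,W_d)$ for cores $W_k\in\mathbb R^{r_{k-1}\times n_k\times r_k}$ is the tensor with entries $W_1(i_1)W_2(i_2)\cdots W_d(i_d)$, where $W_k(i)\in\mathbb R^{r_{k-1}\times r_k}$ is the slice with middle index $i$. A decomposition $W_1,\dots,W_d$ of $M_{TT}(W_1,\dots,W_d)$ is minimal if the TT-rank of that tensor is $\mathbf r$, and left-orthogonal if $(W_k^L)^\top W_k^L=I_{r_k}$ for $k\in[d-1]$, where $W^L:=W^{<2>}\in\mathbb R^{r_{k-1}n_k\times r_k}$. *)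

theory Defs
  imports "HOL-Analysis.Analysis" "HOL-Library.Landau_Symbols" "Jordan_Normal_Form.DL_Rank"
begin

text \<open>Indices are 0-based. A tensor in R^(n_1 x ... x n_d) is a function
 Z :: (nat => nat) => real on multi-indices i with i k < n k for k in {1..d}
 (values at other multi-indices are irrelevant). A TT core number k is a function
 W :: nat => nat => nat => real, W a i b = W_k(i)(a,b), a < r(k-1), i < n k, b < r k.
 A family of cores is Ws :: nat => (nat => nat => nat => real), indexed by k in {1..d}.\<close>

type_synonym tensor = "(nat \<Rightarrow> nat) \<Rightarrow> real"
type_synonym core = "nat \<Rightarrow> nat \<Rightarrow> nat \<Rightarrow> real"

definition valid_index :: "nat \<Rightarrow> (nat \<Rightarrow> nat) \<Rightarrow> (nat \<Rightarrow> nat) \<Rightarrow> bool" where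
  "valid_index d n i \<longleftrightarrow> (\<forall>k\<in>{1..d}. i k < n k)"

definition colex_index :: "(nat \<Rightarrow> nat) \<Rightarrow> nat \<Rightarrow> nat \<Rightarrow> nat \<Rightarrow> nat \<Rightarrow> nat" where
  "colex_index n \<mu> p q k =
     (if k \<le> \<mu> then (p div (\<Prod>j\<in>{1..<k}. n j)) mod n k
      else (q div (\<Prod>j\<in>{\<mu>+1..<k}. n j)) mod n k)"

definition flattening :: "nat \<Rightarrow> (nat \<Rightarrow> nat) \<Rightarrow> nat \<Rightarrow> tensor \<Rightarrow> real mat" where
  "flattening d n \<mu> Z =
     mat (\<Prod>j\<in>{1..\<mu>}. n j) (\<Prod>j\<in>{\<mu>+1..d}. n j) (\<lambda>(p, q). Z (colex_index n \<mu> p q))"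

definition mat_rank :: "real mat \<Rightarrow> nat" where
  "mat_rank A = vec_space.rank (dim_row A) A"

definition has_TT_rank :: "nat \<Rightarrow> (nat \<Rightarrow> nat) \<Rightarrow> (nat \<Rightarrow> nat) \<Rightarrow> tensor \<Rightarrow> bool" where
  "has_TT_rank d n r Z \<longleftrightarrow> (\<forall>\<mu>\<in>{1..<d}. mat_rank (flattening d n \<mu> Z) = r \<mu>)"

definition TT_manifold :: "nat \<Rightarrow> (nat \<Rightarrow> nat) \<Rightarrow> (nat \<Rightarrow> nat) \<Rightarrow> tensor set" where
  "TT_manifold d n r = {Z. has_TT_rank d n r Z}"

text \<open>row vector W_1(i_1)...W_k(i_k), entry b (row index 0 since r_0 = 1)\<close>
fun partial_prod :: "(nat \<Rightarrow> nat) \<Rightarrow> (nat \<Rightarrow> core) \<Rightarrow> nat \<Rightarrow> (nat \<Rightarrow> nat) \<Rightarrow> nat \<Rightarrow> real" where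
  "partial_prod r W 0 i b = (if b = 0 then 1 else 0)"
| "partial_prod r W (Suc k) i b =
     (\<Sum>a<r k. partial_prod r W k i a * W (Suc k) a (i (Suc k)) b)"

definition M_TT :: "nat \<Rightarrow> (nat \<Rightarrow> nat) \<Rightarrow> (nat \<Rightarrow> core) \<Rightarrow> tensor" where
  "M_TT d r W = (\<lambda>i. partial_prod r W d i 0)"

text \<open>W_k^L has rows indexed by (a,i), a < r(k-1), i < n k; (W^L)^T W^L = I\<close>
definition left_orth_core :: "(nat \<Rightarrow> nat) \<Rightarrow> (nat \<Rightarrow> nat) \<Rightarrow> nat \<Rightarrow> core \<Rightarrow> bool" where
  "left_orth_core n r k W \<longleftrightarrow>
     (\<forall>b<r k. \<forall>b'<r k. (\<Sum>a<r (k-1). \<Sum>i<n k. W a i b * W a i b') = (if b = b' then 1 else 0))"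

definition left_orthogonal :: "nat \<Rightarrow> (nat \<Rightarrow> nat) \<Rightarrow> (nat \<Rightarrow> nat) \<Rightarrow> (nat \<Rightarrow> core) \<Rightarrow> bool" where
  "left_orthogonal d n r W \<longleftrightarrow> (\<forall>k\<in>{1..<d}. left_orth_core n r k (W k))"

definition minimal_TT :: "nat \<Rightarrow> (nat \<Rightarrow> nat) \<Rightarrow> (nat \<Rightarrow> nat) \<Rightarrow> (nat \<Rightarrow> core) \<Rightarrow> bool" where
  "minimal_TT d n r W \<longleftrightarrow> has_TT_rank d n r (M_TT d r W)"

definition gauge_core :: "(nat \<Rightarrow> nat) \<Rightarrow> (nat \<Rightarrow> nat) \<Rightarrow> nat \<Rightarrow> core \<Rightarrow> core \<Rightarrow> bool" where
  "gauge_core n r k dV U \<longleftrightarrow>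
     (\<forall>b<r k. \<forall>b'<r k. (\<Sum>a<r (k-1). \<Sum>i<n k. dV a i b * U a i b') = 0)"

definition TT_tangent :: "nat \<Rightarrow> (nat \<Rightarrow> nat) \<Rightarrow> (nat \<Rightarrow> core) \<Rightarrow> (nat \<Rightarrow> core) \<Rightarrow> tensor" where
  "TT_tangent d r U dV = (\<lambda>i. \<Sum>k\<in>{1..d}. M_TT d r (U(k := dV k)) i)"

definition smooth_on_real :: "real set \<Rightarrow> (real \<Rightarrow> real) \<Rightarrow> bool" where
  "smooth_on_real S f \<longleftrightarrow>
     (\<exists>D. D 0 = f \<and> (\<forall>m. \<forall>x\<in>S. (D m has_real_derivative D (Suc m) x) (at x)))"

definition smooth_core_curve :: "(nat \<Rightarrow> nat) \<Rightarrow> (nat \<Rightarrow> nat) \<Rightarrow> nat \<Rightarrow> real set \<Rightarrow> (real \<Rightarrow> core) \<Rightarrow> bool" where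
  "smooth_core_curve n r k S c \<longleftrightarrow>
     (\<forall>a<r (k-1). \<forall>i<n k. \<forall>b<r k. smooth_on_real S (\<lambda>t. c t a i b))"

end

theory Submission
  imports Defs
begin


fun Ck :: "nat \<Rightarrow> (real \<Rightarrow> real) \<Rightarrow> bool" where
  "Ck 0 f = True"
| "Ck (Suc m) f = (\<exists>f'. (\<forall>x. (f has_real_derivative f' x) (at x)) \<and> Ck m f')"

definition smooth :: "(real \<Rightarrow> real) \<Rightarrow> bool" where
  "smooth f \<longleftrightarrow> (\<forall>m. Ck m f)"

lemma Ck_mono: "Ck (Suc m) f \<Longrightarrow> Ck m f"
proof (induction m arbitrary: f)
  case 0 then show ?case by simp
next
  case (Suc m)
  then obtain f' where "\<forall>x. (f has_real_derivative f' x) (at x)" "Ck (Suc m) f'" by auto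
  then show ?case using Suc.IH by auto
qed

lemma Ck_const: "Ck m (\<lambda>x. c)"
proof (induction m arbitrary: c)
  case 0 then show ?case by simp
next
  case (Suc m) then show ?case by (auto intro!: exI[of _ "\<lambda>x. 0"])
qed

lemma Ck_id: "Ck m (\<lambda>x. x)"
proof (cases m)
  case 0 then show ?thesis by simp
next
  case (Suc k) then show ?thesis using Ck_const by (auto intro!: exI[of _ "\<lambda>x. 1"])
qed

lemma Ck_add: "Ck m f \<Longrightarrow> Ck m g \<Longrightarrow> Ck m (\<lambda>x. f x + g x)"
proof (induction m arbitrary: f g)
  case 0 then show ?case by simp
next
  case (Suc m)
  obtain f' where f': "\<forall>x. (f has_real_derivative f' x) (at x)" "Ck m f'" using Suc.prems by auto
  obtain g' where g': "\<forall>x. (g has_real_derivative g' x) (at x)" "Ck m g'" using Suc.prems by auto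
  show ?case using f' g' Suc.IH[of f' g']
    by (auto intro!: exI[of _ "\<lambda>x. f' x + g' x"] DERIV_add)
qed

lemma Ck_mult: "Ck m f \<Longrightarrow> Ck m g \<Longrightarrow> Ck m (\<lambda>x. f x * g x)"
proof (induction m arbitrary: f g)
  case 0 then show ?case by simp
next
  case (Suc m)
  obtain f' where f': "\<forall>x. (f has_real_derivative f' x) (at x)" "Ck m f'" using Suc.prems by auto
  obtain g' where g': "\<forall>x. (g has_real_derivative g' x) (at x)" "Ck m g'" using Suc.prems by auto
  have "Ck m f" "Ck m g" using Suc.prems Ck_mono by blast+
  then have "Ck m (\<lambda>x. f' x * g x + g' x * f x)"
    using Suc.IH f'(2) g'(2) by (intro Ck_add) auto
  then show ?case using f' g'
    by (auto intro!: exI[of _ "\<lambda>x. f' x * g x + g' x * f x"] DERIV_mult)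
qed

lemma Ck_invsqrt: "Ck m g \<Longrightarrow> (\<forall>x. g x > 0) \<Longrightarrow> Ck m (\<lambda>x. inverse (sqrt (g x)))"
proof (induction m arbitrary: g)
  case 0 then show ?case by simp
next
  case (Suc m)
  obtain g' where g': "\<forall>x. (g has_real_derivative g' x) (at x)" "Ck m g'" using Suc.prems by auto
  have "Ck m g" using Suc.prems Ck_mono by blast
  then have h: "Ck m (\<lambda>x. inverse (sqrt (g x)))" using Suc.IH Suc.prems by blast
  have "Ck m (\<lambda>x. (- 1/2) * g' x * (inverse (sqrt (g x)) * (inverse (sqrt (g x)) * inverse (sqrt (g x)))))"
    using h g'(2) by (intro Ck_mult Ck_const) auto
  moreover have "((\<lambda>x. inverse (sqrt (g x))) has_real_derivative
     (- 1/2) * g' x * (inverse (sqrt (g x)) * (inverse (sqrt (g x)) * inverse (sqrt (g x))))) (at x)" for x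
  proof -
    have gx: "g x > 0" using Suc.prems by auto
    have "((\<lambda>x. sqrt (g x)) has_real_derivative inverse (sqrt (g x)) / 2 * g' x) (at x)"
      using DERIV_chain2[OF DERIV_real_sqrt[OF gx] g'(1)[rule_format, of x]] .
    from DERIV_inverse_fun[OF this] gx
    have "((\<lambda>x. inverse (sqrt (g x))) has_real_derivative
       - (inverse (sqrt (g x)) / 2 * g' x * inverse (sqrt (g x) ^ Suc (Suc 0)))) (at x)" by simp
    moreover have "- (inverse (sqrt (g x)) / 2 * g' x * inverse (sqrt (g x) ^ Suc (Suc 0)))
       = (- 1/2) * g' x * (inverse (sqrt (g x)) * (inverse (sqrt (g x)) * inverse (sqrt (g x))))"
      using gx by (simp add: field_simps power2_eq_square)
    ultimately show ?thesis by (rule DERIV_cong)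
  qed
  ultimately show ?case
    by (simp only: Ck.simps) (rule exI[where x="\<lambda>x. (- 1/2) * g' x * (inverse (sqrt (g x)) * (inverse (sqrt (g x)) * inverse (sqrt (g x))))"], blast)
qed

lemma Ck_sum: "finite A \<Longrightarrow> (\<And>a. a \<in> A \<Longrightarrow> Ck m (f a)) \<Longrightarrow> Ck m (\<lambda>x. \<Sum>a\<in>A. f a x)"
  by (induction A rule: finite_induct) (auto intro: Ck_add Ck_const)

lemma smooth_const[simp]: "smooth (\<lambda>x. c)" by (simp add: smooth_def Ck_const)
lemma smooth_id[simp]: "smooth (\<lambda>x. x)" by (simp add: smooth_def Ck_id)
lemma smooth_add: "smooth f \<Longrightarrow> smooth g \<Longrightarrow> smooth (\<lambda>x. f x + g x)"
  by (simp add: smooth_def Ck_add)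
lemma smooth_mult: "smooth f \<Longrightarrow> smooth g \<Longrightarrow> smooth (\<lambda>x. f x * g x)"
  by (simp add: smooth_def Ck_mult)
lemma smooth_sum: "finite A \<Longrightarrow> (\<And>a. a \<in> A \<Longrightarrow> smooth (f a)) \<Longrightarrow> smooth (\<lambda>x. \<Sum>a\<in>A. f a x)"
  by (simp add: smooth_def Ck_sum)
lemma smooth_diff: "smooth f \<Longrightarrow> smooth g \<Longrightarrow> smooth (\<lambda>x. f x - g x)"
proof -
  assume "smooth f" "smooth g"
  then have "smooth (\<lambda>x. f x + (-1) * g x)" by (intro smooth_add smooth_mult) auto
  then show ?thesis by simp
qed
lemma smooth_invsqrt: "smooth g \<Longrightarrow> (\<forall>x. g x > 0) \<Longrightarrow> smooth (\<lambda>x. inverse (sqrt (g x)))"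
  by (simp add: smooth_def Ck_invsqrt)

lemma Ck_Suc_deriv: "Ck (Suc m) f \<Longrightarrow> (\<forall>x. (f has_real_derivative deriv f x) (at x)) \<and> Ck m (deriv f)"
proof -
  assume "Ck (Suc m) f"
  then obtain f' where f': "\<forall>x. (f has_real_derivative f' x) (at x)" "Ck m f'" by auto
  then have "deriv f = f'" using DERIV_imp_deriv by (auto simp: fun_eq_iff)
  then show ?thesis using f' by simp
qed

lemma smooth_deriv: "smooth f \<Longrightarrow> (\<forall>x. (f has_real_derivative deriv f x) (at x)) \<and> smooth (deriv f)"
  unfolding smooth_def using Ck_Suc_deriv by blast

lemma smooth_imp_smooth_on_real: "smooth f \<Longrightarrow> smooth_on_real S f"
proof -
  assume f: "smooth f"
  define D where "D m = (deriv ^^ m) f" for m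
  have "smooth (D m)" for m
    by (induction m) (auto simp: D_def f dest: smooth_deriv)
  then have "\<forall>m x. (D m has_real_derivative D (Suc m) x) (at x)"
    using smooth_deriv by (auto simp: D_def)
  then show ?thesis unfolding smooth_on_real_def by (intro exI[of _ D]) (auto simp: D_def)
qed

lemma deriv_even_zero:
  assumes d: "(f has_real_derivative D) (at 0)" and ev: "\<forall>t. f (-t) = f t"
  shows "D = 0"
proof -
  have "((\<lambda>t. f (-t)) has_real_derivative D * (-1)) (at 0)"
    using DERIV_chain2[where f=f and g="\<lambda>t. -t" and x=0 and Da=D and Db="-1" and s=UNIV] d
    by (auto intro: DERIV_minus[OF DERIV_ident, simplified])
  moreover have "(\<lambda>t. f (-t)) = f" using ev by auto
  ultimately have "(f has_real_derivative D * (-1)) (at 0)" by simp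
  then have "D * (-1) = D" using d DERIV_unique by blast
  then show ?thesis by simp
qed

lemma smooth_even_O2:
  assumes f: "smooth f" and ev: "\<forall>t. f (-t) = f t"
  shows "\<exists>C \<delta>. \<delta> > 0 \<and> (\<forall>t. \<bar>t\<bar> < \<delta> \<longrightarrow> \<bar>f t - f 0\<bar> \<le> C * t\<^sup>2)"
proof -
  define f' where "f' = deriv f"
  have df: "\<forall>x. (f has_real_derivative f' x) (at x)" and sf': "smooth f'"
    using smooth_deriv[OF f] by (auto simp: f'_def)
  have f'0: "f' 0 = 0" using deriv_even_zero[OF df[rule_format, of 0] ev] .
  obtain L where L: "(f' has_real_derivative L) (at 0)" using smooth_deriv[OF sf'] by blast
  then have "((\<lambda>h. (f' (0 + h) - f' 0) / h) \<longlongrightarrow> L) (at 0)"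
    using DERIV_def by blast
  then have "((\<lambda>h. f' h / h) \<longlongrightarrow> L) (at 0)" using f'0 by simp
  then have "((\<lambda>h. \<bar>f' h / h\<bar>) \<longlongrightarrow> \<bar>L\<bar>) (at 0)" by (rule tendsto_rabs)
  then have "eventually (\<lambda>h. \<bar>f' h / h\<bar> < \<bar>L\<bar> + 1) (at 0)"
    by (rule order_tendstoD) simp
  then obtain \<delta> where \<delta>: "\<delta> > 0" "\<forall>h. h \<noteq> 0 \<and> dist h 0 < \<delta> \<longrightarrow> \<bar>f' h / h\<bar> < \<bar>L\<bar> + 1"
    unfolding eventually_at by auto
  define C where "C = \<bar>L\<bar> + 1"
  have bnd: "\<bar>f' h\<bar> \<le> C * \<bar>h\<bar>" if "\<bar>h\<bar> < \<delta>" for h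
  proof (cases "h = 0")
    case True then show ?thesis using f'0 by simp
  next
    case False
    then have "\<bar>f' h / h\<bar> < C" using \<delta> that by (auto simp: C_def)
    then show ?thesis using False by (simp add: abs_divide divide_less_eq less_imp_le)
  qed
  have "\<bar>f t - f 0\<bar> \<le> C * t\<^sup>2" if t: "\<bar>t\<bar> < \<delta>" for t
  proof (cases "t = 0")
    case True then show ?thesis by simp
  next
    case False
    obtain z where z: "\<bar>z\<bar> \<le> \<bar>t\<bar>" "f t - f 0 = t * f' z"
    proof (cases "t > 0")
      case True
      from MVT2[OF True, of f f'] df obtain z where "0 < z" "z < t" "f t - f 0 = (t - 0) * f' z" by blast
      then show ?thesis using that[of z] by auto
    next
      case False
      then have "t < 0" using \<open>t \<noteq> 0\<close> by simp
      from MVT2[OF this, of f f'] df obtain z where "t < z" "z < 0" "f 0 - f t = (0 - t) * f' z" by blast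
      then show ?thesis using that[of z] by (auto simp: algebra_simps)
    qed
    have "\<bar>f' z\<bar> \<le> C * \<bar>z\<bar>" using bnd z t by simp
    also have "\<dots> \<le> C * \<bar>t\<bar>" using z by (intro mult_left_mono) (auto simp: C_def)
    finally have "\<bar>t\<bar> * \<bar>f' z\<bar> \<le> \<bar>t\<bar> * (C * \<bar>t\<bar>)" by (intro mult_left_mono) auto
    then show ?thesis using z by (simp add: abs_mult power2_eq_square algebra_simps)
  qed
  then show ?thesis using \<delta>(1) by blast
qed



context
  fixes W :: core and R N r :: nat
begin

definition ip :: "real \<Rightarrow> (nat \<Rightarrow> real) \<Rightarrow> (nat \<Rightarrow> real) \<Rightarrow> real" where
  "ip s x y = (\<Sum>a<r. x a * y a) +
     s * (\<Sum>\<alpha><R. \<Sum>i<N. (\<Sum>a<r. W \<alpha> i a * x a) * (\<Sum>b<r. W \<alpha> i b * y b))"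

definition ev :: "nat \<Rightarrow> nat \<Rightarrow> real" where "ev j = (\<lambda>a. if a = j then 1 else 0)"

primrec gsl :: "real \<Rightarrow> nat \<Rightarrow> (nat \<Rightarrow> real) list" where
  "gsl s 0 = []"
| "gsl s (Suc j) = (let qs = gsl s j;
     z = (\<lambda>a. ev j a - (\<Sum>i<j. ip s (ev j) (qs!i) * (qs!i) a))
   in qs @ [(\<lambda>a. z a * inverse (sqrt (ip s z z)))])"

definition q :: "real \<Rightarrow> nat \<Rightarrow> nat \<Rightarrow> real" where "q s j = gsl s (Suc j) ! j"

definition zz :: "real \<Rightarrow> nat \<Rightarrow> nat \<Rightarrow> real" where
  "zz s j = (\<lambda>a. ev j a - (\<Sum>i<j. ip s (ev j) (q s i) * q s i a))"

lemma length_gsl[simp]: "length (gsl s m) = m"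
  by (induction m) (auto simp: Let_def)

lemma gsl_nth: "i < m \<Longrightarrow> gsl s m ! i = q s i"
proof (induction m)
  case 0 then show ?case by simp
next
  case (Suc m)
  show ?case
  proof (cases "i < m")
    case True then show ?thesis using Suc by (simp add: Let_def nth_append)
  next
    case False then have "i = m" using Suc by simp
    then show ?thesis by (simp add: q_def)
  qed
qed

definition zg :: "real \<Rightarrow> nat \<Rightarrow> nat \<Rightarrow> real" where
  "zg s j = (\<lambda>a. ev j a - (\<Sum>i<j. ip s (ev j) (gsl s j ! i) * (gsl s j ! i) a))"

lemma q_eq0: "q s j = (\<lambda>a. zg s j a * inverse (sqrt (ip s (zg s j) (zg s j))))"
  unfolding q_def zg_def by (simp add: Let_def nth_append)

lemma zg_zz: "zg s j = zz s j"
  unfolding zg_def zz_def by (auto simp: gsl_nth fun_eq_iff intro!: sum.cong)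

lemma q_eq: "q s j = (\<lambda>a. zz s j a * inverse (sqrt (ip s (zz s j) (zz s j))))"
  using q_eq0 zg_zz by simp

lemma ip_sym: "ip s x y = ip s y x"
  unfolding ip_def by (simp add: mult.commute)

lemma lin_aux: fixes u v :: real shows "(\<Sum>\<alpha><R. \<Sum>i<N. (u * X \<alpha> i + v * Y \<alpha> i) * Z \<alpha> i)
   = u * (\<Sum>\<alpha><R. \<Sum>i<N. X \<alpha> i * Z \<alpha> i) + v * (\<Sum>\<alpha><R. \<Sum>i<N. Y \<alpha> i * Z \<alpha> i)"
  by (simp add: algebra_simps sum.distrib sum_distrib_left)

lemma ip_lin: "ip s (\<lambda>a. u * x a + v * y a) z = u * ip s x z + v * ip s y z"
proof -
  have h: "\<And>\<alpha> i. (\<Sum>a<r. W \<alpha> i a * (u * x a + v * y a)) = u * (\<Sum>a<r. W \<alpha> i a * x a) + v * (\<Sum>a<r. W \<alpha> i a * y a)"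
    by (simp add: algebra_simps sum.distrib sum_distrib_left)
  have h2: "(\<Sum>a<r. (u * x a + v * y a) * z a) = u * (\<Sum>a<r. x a * z a) + v * (\<Sum>a<r. y a * z a)"
    by (simp add: algebra_simps sum.distrib sum_distrib_left)
  show ?thesis unfolding ip_def h h2 lin_aux by (simp add: algebra_simps)
qed

lemma ip_zero: "ip s (\<lambda>a. 0) z = 0"
  unfolding ip_def by simp

lemma ip_sum: "finite L \<Longrightarrow> ip s (\<lambda>a. \<Sum>l\<in>L. c l * x l a) z = (\<Sum>l\<in>L. c l * ip s (x l) z)"
proof (induction L rule: finite_induct)
  case empty then show ?case by (simp add: ip_zero)
next
  case (insert l L)
  have "ip s (\<lambda>a. \<Sum>l\<in>insert l L. c l * x l a) z = ip s (\<lambda>a. c l * x l a + 1 * (\<Sum>l\<in>L. c l * x l a)) z"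
    using insert by simp
  also have "\<dots> = c l * ip s (x l) z + ip s (\<lambda>a. \<Sum>l\<in>L. c l * x l a) z"
    by (subst ip_lin) simp
  finally show ?case using insert by simp
qed

lemma ip_diff_sum: fixes j :: nat shows "ip s (\<lambda>a. y a - (\<Sum>l<j. c l * x l a)) z = ip s y z - (\<Sum>l<j. c l * ip s (x l) z)"
proof -
  have "ip s (\<lambda>a. y a - (\<Sum>l<j. c l * x l a)) z = ip s (\<lambda>a. 1 * y a + (-1) * (\<Sum>l<j. c l * x l a)) z"
    by simp
  also have "\<dots> = ip s y z - ip s (\<lambda>a. \<Sum>l<j. c l * x l a) z" by (subst ip_lin) simp
  also have "ip s (\<lambda>a. \<Sum>l<j. c l * x l a) z = (\<Sum>l<j. c l * ip s (x l) z)" by (rule ip_sum) simp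
  finally show ?thesis .
qed

lemma ip_scale: "ip s (\<lambda>a. x a * k) z = k * ip s x z"
proof -
  have "ip s (\<lambda>a. x a * k) z = ip s (\<lambda>a. k * x a + 0 * x a) z" by (simp add: mult.commute)
  also have "\<dots> = k * ip s x z + 0 * ip s x z" by (rule ip_lin)
  finally show ?thesis by simp
qed

lemma ip_ge: assumes "s \<ge> 0" "j < r" shows "ip s x x \<ge> (x j)\<^sup>2"
proof -
  have "(x j)\<^sup>2 \<le> (\<Sum>a<r. x a * x a)"
    using member_le_sum[of j "{..<r}" "\<lambda>a. x a * x a"] assms by (simp add: power2_eq_square)
  moreover have "0 \<le> s * (\<Sum>\<alpha><R. \<Sum>i<N. (\<Sum>a<r. W \<alpha> i a * x a) * (\<Sum>b<r. W \<alpha> i b * x b))"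
  proof -
    have "\<forall>\<alpha> i. 0 \<le> (\<Sum>a<r. W \<alpha> i a * x a) * (\<Sum>b<r. W \<alpha> i b * x b)" by simp
    then show ?thesis using assms by (intro mult_nonneg_nonneg[OF assms(1)] sum_nonneg) auto
  qed
  ultimately show ?thesis unfolding ip_def by linarith
qed

lemma q_tri: "a > j \<Longrightarrow> q s j a = 0"
proof (induction j arbitrary: a rule: less_induct)
  case (less j)
  have "zz s j a = 0" unfolding zz_def ev_def using less by (auto intro!: sum.neutral)
  then show ?case by (simp add: q_eq)
qed

lemma zz_diag: "zz s j j = 1"
  unfolding zz_def ev_def using q_tri by (auto intro!: sum.neutral)

lemma ip_zz_pos: "s \<ge> 0 \<Longrightarrow> j < r \<Longrightarrow> ip s (zz s j) (zz s j) \<ge> 1"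
  using ip_ge[of s j "zz s j"] zz_diag by simp

lemma q_orth: assumes s: "s \<ge> 0" shows "j < r \<Longrightarrow> i \<le> j \<Longrightarrow> ip s (q s i) (q s j) = (if i = j then 1 else 0)"
proof (induction j arbitrary: i rule: less_induct)
  case (less j)
  define p where "p = ip s (zz s j) (zz s j)"
  have p: "p \<ge> 1" using ip_zz_pos[OF s less(2)] by (simp add: p_def)
  have qj: "q s j = (\<lambda>a. zz s j a * inverse (sqrt p))" by (simp add: q_eq p_def)
  show ?case
  proof (cases "i = j")
    case True
    have "ip s (q s j) (q s j) = inverse (sqrt p) * ip s (zz s j) (q s j)" by (simp add: qj ip_scale)
    also have "\<dots> = inverse (sqrt p) * (inverse (sqrt p) * p)"
      by (subst ip_sym) (simp add: qj ip_scale p_def ip_sym)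
    also have "\<dots> = 1" using p by (simp add: field_simps)
    finally show ?thesis using True by simp
  next
    case False
    then have ij: "i < j" using less by simp
    have IH: "l < j \<Longrightarrow> ip s (q s l) (q s i) = (if l = i then 1 else 0)" for l
    proof -
      assume l: "l < j"
      show ?thesis
      proof (cases "i \<le> l")
        case True then show ?thesis using less(1)[of l i] l less(2) by (subst ip_sym) simp
      next
        case False then show ?thesis using less(1)[of i l] ij less(2) by simp
      qed
    qed
    have "ip s (zz s j) (q s i) = ip s (ev j) (q s i) - (\<Sum>l<j. ip s (ev j) (q s l) * ip s (q s l) (q s i))"
      unfolding zz_def by (rule ip_diff_sum)
    also have "(\<Sum>l<j. ip s (ev j) (q s l) * ip s (q s l) (q s i)) = (\<Sum>l<j. if l = i then ip s (ev j) (q s i) else 0)"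
      by (rule sum.cong) (auto simp: IH)
    also have "\<dots> = ip s (ev j) (q s i)" using ij by simp
    finally have "ip s (zz s j) (q s i) = 0" by simp
    then have "ip s (q s j) (q s i) = 0" by (simp add: qj ip_scale)
    then show ?thesis using False by (simp add: ip_sym)
  qed
qed

lemma q_zero: "j < r \<Longrightarrow> q 0 j = ev j"
proof (induction j rule: less_induct)
  case (less j)
  have "ip 0 (ev j) (q 0 i) = 0" if "i < j" for i
    using less that unfolding ip_def ev_def by (auto simp: if_distrib cong: if_cong)
  then have z: "zz 0 j = ev j" unfolding zz_def by (auto simp: fun_eq_iff)
  have "ip 0 (ev j) (ev j) = 1" using less unfolding ip_def ev_def by (simp add: if_distrib cong: if_cong)
  then show ?case by (simp add: q_eq z)
qed

lemma smooth_ip: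
  assumes "smooth s" "\<And>a. smooth (\<lambda>t. x t a)" "\<And>a. smooth (\<lambda>t. y t a)"
  shows "smooth (\<lambda>t. ip (s t) (x t) (y t))"
  unfolding ip_def using assms
  by (intro smooth_add smooth_mult smooth_sum) auto

lemma smooth_q: "j < r \<Longrightarrow> smooth (\<lambda>t. q (t\<^sup>2) j a)"
proof (induction j arbitrary: a rule: less_induct)
  case (less j)
  have s2: "smooth (\<lambda>t. t\<^sup>2)" unfolding power2_eq_square by (intro smooth_mult) auto
  have ev: "smooth (\<lambda>t. ev j a)" for a by simp
  have zs: "smooth (\<lambda>t. zz (t\<^sup>2) j a)" for a
    unfolding zz_def using less
    by (intro smooth_diff smooth_sum smooth_mult smooth_ip s2) auto
  have "smooth (\<lambda>t. inverse (sqrt (ip (t\<^sup>2) (zz (t\<^sup>2) j) (zz (t\<^sup>2) j))))"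
  proof -
    have "\<forall>t. 0 < ip (t\<^sup>2) (zz (t\<^sup>2) j) (zz (t\<^sup>2) j)"
    proof
      fix t
      have "1 \<le> ip (t\<^sup>2) (zz (t\<^sup>2) j) (zz (t\<^sup>2) j)" using ip_zz_pos[OF zero_le_power2 less(2)] .
      then show "0 < ip (t\<^sup>2) (zz (t\<^sup>2) j) (zz (t\<^sup>2) j)" by linarith
    qed
    then show ?thesis by (intro smooth_invsqrt smooth_ip s2 zs) auto
  qed
  then show ?case unfolding q_eq using zs by (intro smooth_mult) auto
qed

end



definition cc :: "core \<Rightarrow> core \<Rightarrow> nat \<Rightarrow> nat \<Rightarrow> nat \<Rightarrow> real \<Rightarrow> core" where
  "cc W U R N rr t = (\<lambda>\<alpha> i b. if b < rr then (\<Sum>a<rr. (U \<alpha> i a + t * W \<alpha> i a) * q W R N rr (t\<^sup>2) b a)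
      else U \<alpha> i b + t * W \<alpha> i b)"

lemma cc_smooth: "smooth (\<lambda>t. cc W U R N rr t \<alpha> i b)"
proof (cases "b < rr")
  case True
  have "smooth (\<lambda>t. \<Sum>a<rr. (U \<alpha> i a + t * W \<alpha> i a) * q W R N rr (t\<^sup>2) b a)"
    using smooth_q[OF True] by (intro smooth_sum smooth_mult smooth_add) auto
  then show ?thesis using True by (simp add: cc_def)
next
  case False
  then show ?thesis by (simp add: cc_def smooth_add smooth_mult)
qed

lemma cc_zero: "cc W U R N rr 0 = U"
proof -
  have "(\<Sum>a<rr. U \<alpha> i a * q W R N rr 0 b a) = U \<alpha> i b" if "b < rr" for \<alpha> i b
  proof -
    have "(\<Sum>a<rr. U \<alpha> i a * q W R N rr 0 b a) = (\<Sum>a<rr. if a = b then U \<alpha> i b else 0)"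
      using q_zero[OF that] by (intro sum.cong) (auto simp: ev_def)
    then show ?thesis using that by simp
  qed
  then show ?thesis by (auto simp: cc_def fun_eq_iff)
qed

lemma O2_of_smooth_even:
  assumes "smooth f" "\<forall>t. f (-t) = f t"
  shows "(\<lambda>t. f t - f 0) \<in> O[at 0](\<lambda>t. t\<^sup>2)"
proof -
  obtain C \<delta> where C: "\<delta> > 0" "\<forall>t. \<bar>t\<bar> < \<delta> \<longrightarrow> \<bar>f t - f 0\<bar> \<le> C * t\<^sup>2"
    using smooth_even_O2[OF assms] by blast
  have "eventually (\<lambda>t. norm (f t - f 0) \<le> C * norm (t\<^sup>2)) (at 0)"
    unfolding eventually_at using C by (intro exI[of _ \<delta>]) auto
  then show ?thesis by (rule bigoI)
qed

lemma cc_O2: "(\<lambda>t. cc W U R N rr t \<alpha> i b - U \<alpha> i b - t * W \<alpha> i b) \<in> O[at 0](\<lambda>t. t\<^sup>2)"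
proof (cases "b < rr")
  case False
  then show ?thesis by (simp add: cc_def)
next
  case True
  have eq: "cc W U R N rr t \<alpha> i b - U \<alpha> i b - t * W \<alpha> i b =
     (\<Sum>a<rr. (U \<alpha> i a + t * W \<alpha> i a) * (q W R N rr (t\<^sup>2) b a - ev b a))" for t
  proof -
    have "(\<Sum>a<rr. (U \<alpha> i a + t * W \<alpha> i a) * ev b a) = U \<alpha> i b + t * W \<alpha> i b"
      using True by (simp add: ev_def if_distrib cong: if_cong)
    then show ?thesis using True by (simp add: cc_def algebra_simps sum_subtractf)
  qed
  have "(\<lambda>t. \<Sum>a<rr. (U \<alpha> i a + t * W \<alpha> i a) * (q W R N rr (t\<^sup>2) b a - ev b a)) \<in> O[at 0](\<lambda>t. t\<^sup>2)"
  proof (rule big_sum_in_bigo)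
    fix a assume a: "a \<in> {..<rr}"
    have 1: "(\<lambda>t. U \<alpha> i a + t * W \<alpha> i a) \<in> O[at 0](\<lambda>_. 1)"
    proof -
      have b: "norm (U \<alpha> i a + t * W \<alpha> i a) \<le> (\<bar>U \<alpha> i a\<bar> + \<bar>W \<alpha> i a\<bar>) * norm (1::real)"
        if "dist t 0 < 1" for t :: real
      proof -
        have "\<bar>t\<bar> \<le> 1" using that by simp
        then have "\<bar>t * W \<alpha> i a\<bar> \<le> \<bar>W \<alpha> i a\<bar>" by (simp add: abs_mult mult_left_le_one_le)
        then show ?thesis by simp
      qed
      have "eventually (\<lambda>t. norm (U \<alpha> i a + t * W \<alpha> i a) \<le> (\<bar>U \<alpha> i a\<bar> + \<bar>W \<alpha> i a\<bar>) * norm (1::real)) (at 0)"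
        unfolding eventually_at using b by (intro exI[of _ 1]) auto
      then show ?thesis by (rule bigoI)
    qed
    have sm: "smooth (\<lambda>t. q W R N rr (t\<^sup>2) b a)" using smooth_q[OF True] .
    have 2: "(\<lambda>t. q W R N rr (t\<^sup>2) b a - ev b a) \<in> O[at 0](\<lambda>t. t\<^sup>2)"
      using O2_of_smooth_even[OF sm] q_zero[OF True] by (simp add: ev_def)
    from landau_o.big.mult[OF 1 2] show "(\<lambda>t. (U \<alpha> i a + t * W \<alpha> i a) * (q W R N rr (t\<^sup>2) b a - ev b a)) \<in> O[at 0](\<lambda>t. t\<^sup>2)"
      by simp
  qed
  then show ?thesis unfolding eq .
qed

lemma bilin_swap: fixes A B :: core shows
  "(\<Sum>\<alpha><R. \<Sum>i<N. (\<Sum>a<rr. A \<alpha> i a * x a) * (\<Sum>a'<rr. B \<alpha> i a' * y a')) =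
   (\<Sum>a<rr. \<Sum>a'<rr. x a * y a' * (\<Sum>\<alpha><R. \<Sum>i<N. A \<alpha> i a * B \<alpha> i a'))"
proof -
  have "(\<Sum>\<alpha><R. \<Sum>i<N. (\<Sum>a<rr. A \<alpha> i a * x a) * (\<Sum>a'<rr. B \<alpha> i a' * y a')) =
     (\<Sum>\<alpha><R. \<Sum>i<N. \<Sum>a<rr. \<Sum>a'<rr. x a * y a' * (A \<alpha> i a * B \<alpha> i a'))"
    by (simp add: sum_product mult_ac)
  also have "\<dots> = (\<Sum>\<alpha><R. \<Sum>a<rr. \<Sum>i<N. \<Sum>a'<rr. x a * y a' * (A \<alpha> i a * B \<alpha> i a'))"
    by (rule sum.cong[OF refl], rule sum.swap)
  also have "\<dots> = (\<Sum>a<rr. \<Sum>\<alpha><R. \<Sum>i<N. \<Sum>a'<rr. x a * y a' * (A \<alpha> i a * B \<alpha> i a'))"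
    by (rule sum.swap)
  also have "\<dots> = (\<Sum>a<rr. \<Sum>\<alpha><R. \<Sum>a'<rr. \<Sum>i<N. x a * y a' * (A \<alpha> i a * B \<alpha> i a'))"
    by (intro sum.cong refl sum.swap)
  also have "\<dots> = (\<Sum>a<rr. \<Sum>a'<rr. \<Sum>\<alpha><R. \<Sum>i<N. x a * y a' * (A \<alpha> i a * B \<alpha> i a'))"
    by (intro sum.cong refl sum.swap)
  also have "\<dots> = (\<Sum>a<rr. \<Sum>a'<rr. x a * y a' * (\<Sum>\<alpha><R. \<Sum>i<N. A \<alpha> i a * B \<alpha> i a'))"
    by (simp add: sum_distrib_left)
  finally show ?thesis .
qed

lemma vv_ip:
  fixes U W :: core
  assumes orth: "\<forall>b<rr. \<forall>b'<rr. (\<Sum>\<alpha><R. \<Sum>i<N. U \<alpha> i b * U \<alpha> i b') = (if b = b' then 1 else 0)"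
    and gauge: "\<forall>b<rr. \<forall>b'<rr. (\<Sum>\<alpha><R. \<Sum>i<N. W \<alpha> i b * U \<alpha> i b') = 0"
  shows "(\<Sum>\<alpha><R. \<Sum>i<N. (\<Sum>a<rr. (U \<alpha> i a + t * W \<alpha> i a) * x a) * (\<Sum>a'<rr. (U \<alpha> i a' + t * W \<alpha> i a') * y a'))
     = ip W R N rr (t\<^sup>2) x y"
proof -
  let ?V = "\<lambda>\<alpha> i a. U \<alpha> i a + t * W \<alpha> i a"
  have "(\<Sum>\<alpha><R. \<Sum>i<N. (\<Sum>a<rr. ?V \<alpha> i a * x a) * (\<Sum>a'<rr. ?V \<alpha> i a' * y a'))
     = (\<Sum>a<rr. \<Sum>a'<rr. x a * y a' * (\<Sum>\<alpha><R. \<Sum>i<N. ?V \<alpha> i a * ?V \<alpha> i a'))"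
    by (rule bilin_swap)
  also have "\<dots> = (\<Sum>a<rr. \<Sum>a'<rr. x a * y a' * ((if a = a' then 1 else 0) + t\<^sup>2 * (\<Sum>\<alpha><R. \<Sum>i<N. W \<alpha> i a * W \<alpha> i a')))"
  proof (intro sum.cong refl)
    fix a a' assume aa: "a \<in> {..<rr}" "a' \<in> {..<rr}"
    have "(\<Sum>\<alpha><R. \<Sum>i<N. ?V \<alpha> i a * ?V \<alpha> i a') =
       (\<Sum>\<alpha><R. \<Sum>i<N. U \<alpha> i a * U \<alpha> i a') + t * (\<Sum>\<alpha><R. \<Sum>i<N. W \<alpha> i a * U \<alpha> i a')
        + t * (\<Sum>\<alpha><R. \<Sum>i<N. W \<alpha> i a' * U \<alpha> i a) + t\<^sup>2 * (\<Sum>\<alpha><R. \<Sum>i<N. W \<alpha> i a * W \<alpha> i a')"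
      by (simp add: algebra_simps sum.distrib sum_distrib_left power2_eq_square)
    also have "\<dots> = (if a = a' then 1 else 0) + t\<^sup>2 * (\<Sum>\<alpha><R. \<Sum>i<N. W \<alpha> i a * W \<alpha> i a')"
      using orth gauge aa by simp
    finally show "x a * y a' * (\<Sum>\<alpha><R. \<Sum>i<N. ?V \<alpha> i a * ?V \<alpha> i a') =
       x a * y a' * ((if a = a' then 1 else 0) + t\<^sup>2 * (\<Sum>\<alpha><R. \<Sum>i<N. W \<alpha> i a * W \<alpha> i a'))" by simp
  qed
  also have "\<dots> = (\<Sum>a<rr. \<Sum>a'<rr. (if a = a' then x a * y a' else 0) + t\<^sup>2 * (x a * y a' * (\<Sum>\<alpha><R. \<Sum>i<N. W \<alpha> i a * W \<alpha> i a')))"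
    by (intro sum.cong refl) (simp add: algebra_simps)
  also have "\<dots> = (\<Sum>a<rr. (\<Sum>a'<rr. if a = a' then x a * y a' else 0)) + t\<^sup>2 * (\<Sum>a<rr. \<Sum>a'<rr. x a * y a' * (\<Sum>\<alpha><R. \<Sum>i<N. W \<alpha> i a * W \<alpha> i a'))"
    by (simp only: sum.distrib sum_distrib_left)
  also have "(\<Sum>a<rr. (\<Sum>a'<rr. if a = a' then x a * y a' else 0)) = (\<Sum>a<rr. x a * y a)"
    by (intro sum.cong refl) simp
  also have "(\<Sum>a<rr. \<Sum>a'<rr. x a * y a' * (\<Sum>\<alpha><R. \<Sum>i<N. W \<alpha> i a * W \<alpha> i a')) =
      (\<Sum>\<alpha><R. \<Sum>i<N. (\<Sum>a<rr. W \<alpha> i a * x a) * (\<Sum>b<rr. W \<alpha> i b * y b))"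
    by (rule bilin_swap[symmetric])
  finally show ?thesis unfolding ip_def .
qed

lemma cc_orth:
  fixes U W :: core
  assumes orth: "\<forall>b<rr. \<forall>b'<rr. (\<Sum>\<alpha><R. \<Sum>i<N. U \<alpha> i b * U \<alpha> i b') = (if b = b' then 1 else 0)"
    and gauge: "\<forall>b<rr. \<forall>b'<rr. (\<Sum>\<alpha><R. \<Sum>i<N. W \<alpha> i b * U \<alpha> i b') = 0"
  shows "\<forall>b<rr. \<forall>b'<rr. (\<Sum>\<alpha><R. \<Sum>i<N. cc W U R N rr t \<alpha> i b * cc W U R N rr t \<alpha> i b') = (if b = b' then 1 else 0)"
proof (intro allI impI)
  fix b b' assume b: "b < rr" "b' < rr"
  have "(\<Sum>\<alpha><R. \<Sum>i<N. cc W U R N rr t \<alpha> i b * cc W U R N rr t \<alpha> i b') =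
     (\<Sum>\<alpha><R. \<Sum>i<N. (\<Sum>a<rr. (U \<alpha> i a + t * W \<alpha> i a) * q W R N rr (t\<^sup>2) b a) *
         (\<Sum>a'<rr. (U \<alpha> i a' + t * W \<alpha> i a') * q W R N rr (t\<^sup>2) b' a'))"
    using b by (simp add: cc_def)
  also have "\<dots> = ip W R N rr (t\<^sup>2) (q W R N rr (t\<^sup>2) b) (q W R N rr (t\<^sup>2) b')"
    by (rule vv_ip[OF orth gauge])
  also have "\<dots> = (if b = b' then 1 else 0)"
  proof (cases "b \<le> b'")
    case True then show ?thesis using q_orth[OF zero_le_power2 b(2) True] by simp
  next
    case False then show ?thesis using q_orth[OF zero_le_power2 b(1), of b'] by (simp add: ip_sym)
  qed
  finally show "(\<Sum>\<alpha><R. \<Sum>i<N. cc W U R N rr t \<alpha> i b * cc W U R N rr t \<alpha> i b') = (if b = b' then 1 else 0)" .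
qed



lemma O2_deriv0:
  assumes f: "f \<in> O[at 0](\<lambda>t. t\<^sup>2)" and f0: "f 0 = 0"
  shows "(f has_real_derivative 0) (at 0)"
proof -
  obtain C where C: "eventually (\<lambda>t. norm (f t) \<le> C * norm (t\<^sup>2)) (at (0::real))"
    using landau_o.bigE[OF f] by blast
  have "eventually (\<lambda>h. norm ((f (0 + h) - f 0) / h) \<le> C * \<bar>h\<bar>) (at (0::real))"
    using C
  proof eventually_elim
    case (elim h)
    then have "\<bar>f h\<bar> \<le> C * (\<bar>h\<bar> * \<bar>h\<bar>)" by (simp add: power2_eq_square abs_mult)
    then have "\<bar>f h\<bar> / \<bar>h\<bar> \<le> C * \<bar>h\<bar>"
      by (cases "h = 0") (simp_all add: divide_le_eq mult_ac)
    then show ?case using f0 by (simp add: abs_divide)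
  qed
  moreover have "((\<lambda>h. C * \<bar>h\<bar>) \<longlongrightarrow> 0) (at (0::real))"
    by (rule tendsto_eq_intros | simp)+
  ultimately have "((\<lambda>h. (f (0 + h) - f 0) / h) \<longlongrightarrow> 0) (at 0)"
    by (rule Lim_null_comparison)
  then show ?thesis by (simp add: DERIV_def)
qed

lemma pp_cong_W: "(\<forall>l\<in>{1..k}. W l = W' l) \<Longrightarrow> partial_prod r W k i b = partial_prod r W' k i b"
proof (induction k arbitrary: b)
  case 0 then show ?case by simp
next
  case (Suc k)
  then show ?case by (auto intro!: sum.cong)
qed

lemma pp_deriv:
  fixes C :: "nat \<Rightarrow> real \<Rightarrow> core"
  assumes C0: "\<And>l. C l 0 = U l"
    and CD: "\<And>l \<alpha> j b. ((\<lambda>t. C l t \<alpha> j b) has_real_derivative dV l \<alpha> j b) (at 0)"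
  shows "((\<lambda>t. partial_prod r (\<lambda>l. C l t) k i b) has_real_derivative
            (\<Sum>l\<in>{1..k}. partial_prod r (U(l := dV l)) k i b)) (at 0)"
proof (induction k arbitrary: b)
  case 0 then show ?case by simp
next
  case (Suc k)
  have U0: "(\<lambda>l. C l 0) = U" using C0 by auto
  have D: "((\<lambda>t. \<Sum>a<r k. partial_prod r (\<lambda>l. C l t) k i a * C (Suc k) t a (i (Suc k)) b) has_real_derivative
     (\<Sum>a<r k. (\<Sum>l\<in>{1..k}. partial_prod r (U(l := dV l)) k i a) * U (Suc k) a (i (Suc k)) b
               + dV (Suc k) a (i (Suc k)) b * partial_prod r U k i a)) (at 0)"
  proof (rule DERIV_sum)
    fix a
    show "((\<lambda>t. partial_prod r (\<lambda>l. C l t) k i a * C (Suc k) t a (i (Suc k)) b) has_real_derivative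
     (\<Sum>l\<in>{1..k}. partial_prod r (U(l := dV l)) k i a) * U (Suc k) a (i (Suc k)) b
               + dV (Suc k) a (i (Suc k)) b * partial_prod r U k i a) (at 0)"
      using DERIV_mult[OF Suc.IH[of a] CD[of "Suc k" a "i (Suc k)" b]] by (simp only: C0 U0)
  qed
  have E: "(\<Sum>a<r k. (\<Sum>l\<in>{1..k}. partial_prod r (U(l := dV l)) k i a) * U (Suc k) a (i (Suc k)) b
               + dV (Suc k) a (i (Suc k)) b * partial_prod r U k i a)
     = (\<Sum>l\<in>{1..Suc k}. partial_prod r (U(l := dV l)) (Suc k) i b)"
  proof -
    have A: "(\<Sum>a<r k. (\<Sum>l\<in>{1..k}. partial_prod r (U(l := dV l)) k i a) * U (Suc k) a (i (Suc k)) b)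
        = (\<Sum>l\<in>{1..k}. partial_prod r (U(l := dV l)) (Suc k) i b)"
      by (simp add: sum_distrib_right) (rule sum.swap)
    have "partial_prod r (U(Suc k := dV (Suc k))) k i a = partial_prod r U k i a" for a
      by (rule pp_cong_W) auto
    then have B: "(\<Sum>a<r k. dV (Suc k) a (i (Suc k)) b * partial_prod r U k i a)
        = partial_prod r (U(Suc k := dV (Suc k))) (Suc k) i b"
      by (simp add: mult.commute)
    show ?thesis using A B by (simp add: sum.distrib)
  qed
  have eq1: "(\<lambda>t. partial_prod r (\<lambda>l. C l t) (Suc k) i b) = (\<lambda>t. \<Sum>a<r k. partial_prod r (\<lambda>l. C l t) k i a * C (Suc k) t a (i (Suc k)) b)"
    by simp
  show ?case unfolding eq1 using DERIV_cong[OF D E] .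
qed



lemma multvec_idx:
  assumes "B \<in> carrier_mat nr R" "v \<in> carrier_vec R" "p < nr"
  shows "(B *\<^sub>v v) $ p = (\<Sum>k<R. B $$ (p,k) * v $ k)"
  using assms by (auto simp: scalar_prod_def row_def atLeast0LessThan intro!: sum.cong)

lemma gram_facts:
  fixes B :: "real mat"
  assumes B: "B \<in> carrier_mat nr R" and v: "v \<in> carrier_vec R"
  defines "G \<equiv> mat R R (\<lambda>(k,l). \<Sum>p<nr. B $$ (p,k) * B $$ (p,l))"
  shows "B *\<^sub>v v = 0\<^sub>v nr \<longleftrightarrow> G *\<^sub>v v = 0\<^sub>v R"
proof -
  have G: "G \<in> carrier_mat R R" by (simp add: G_def)
  have Gv: "(G *\<^sub>v v) $ k = (\<Sum>p<nr. B $$ (p,k) * (B *\<^sub>v v) $ p)" if "k < R" for k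
  proof -
    have "(G *\<^sub>v v) $ k = (\<Sum>l<R. (\<Sum>p<nr. B $$ (p,k) * B $$ (p,l)) * v $ l)"
      using multvec_idx[OF G v that] that by (simp add: G_def)
    also have "\<dots> = (\<Sum>p<nr. B $$ (p,k) * (\<Sum>l<R. B $$ (p,l) * v $ l))"
      by (simp add: sum_distrib_left sum_distrib_right mult.assoc) (rule sum.swap)
    also have "\<dots> = (\<Sum>p<nr. B $$ (p,k) * (B *\<^sub>v v) $ p)"
      using multvec_idx[OF B v] by simp
    finally show ?thesis .
  qed
  show ?thesis
  proof
    assume "B *\<^sub>v v = 0\<^sub>v nr"
    then show "G *\<^sub>v v = 0\<^sub>v R" using G v by (intro eq_vecI) (auto simp: Gv simp del: index_mult_mat_vec)
  next
    assume Gz: "G *\<^sub>v v = 0\<^sub>v R"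
    have "(\<Sum>k<R. v $ k * (G *\<^sub>v v) $ k) = (\<Sum>p<nr. ((B *\<^sub>v v) $ p)\<^sup>2)"
    proof -
      have "(\<Sum>k<R. v $ k * (G *\<^sub>v v) $ k) = (\<Sum>k<R. v $ k * (\<Sum>p<nr. B $$ (p,k) * (B *\<^sub>v v) $ p))"
        by (intro sum.cong refl) (simp add: Gv)
      also have "\<dots> = (\<Sum>p<nr. (\<Sum>k<R. B $$ (p,k) * v $ k) * (B *\<^sub>v v) $ p)"
        by (simp add: sum_distrib_left sum_distrib_right mult_ac) (rule sum.swap)
      also have "\<dots> = (\<Sum>p<nr. ((B *\<^sub>v v) $ p)\<^sup>2)"
        using multvec_idx[OF B v] by (simp add: power2_eq_square)
      finally show ?thesis .
    qed
    moreover have "(\<Sum>k<R. v $ k * (G *\<^sub>v v) $ k) = 0" using Gz by simp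
    ultimately have "(\<Sum>p<nr. ((B *\<^sub>v v) $ p)\<^sup>2) = 0" by simp
    then have "\<forall>p\<in>{..<nr}. ((B *\<^sub>v v) $ p)\<^sup>2 = 0"
      by (subst sum_nonneg_eq_0_iff[symmetric]) auto
    then show "B *\<^sub>v v = 0\<^sub>v nr" using B by (intro eq_vecI) auto
  qed
qed

lemma rank_lsc:
  fixes A :: "real \<Rightarrow> real mat"
  assumes dims: "\<And>t. A t \<in> carrier_mat nr nc"
    and cont: "\<And>p q. p < nr \<Longrightarrow> q < nc \<Longrightarrow> isCont (\<lambda>t. A t $$ (p,q)) 0"
  shows "\<exists>\<epsilon>>0. \<forall>t. \<bar>t\<bar> < \<epsilon> \<longrightarrow> vec_space.rank nr (A 0) \<le> vec_space.rank nr (A t)"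
proof -
  interpret V: vec_space "TYPE(real)" nr .
  let ?P = "\<lambda>T. T \<subseteq> set (cols (A 0)) \<and> V.lin_indpt T"
  have P0: "?P {}" by (simp add: V.lin_dep_def)
  obtain S where S: "finite S" "maximal S ?P"
    using maximal_exists_superset[of "set (cols (A 0))" ?P "{}"] P0 by auto
  have rank0: "V.rank (A 0) = card S" using V.rank_card_indpt[OF dims S(2)] .
  have Ssub: "S \<subseteq> set (cols (A 0))" and Sli: "V.lin_indpt S" using S(2) unfolding maximal_def by auto
  have "set (cols (A 0)) = col (A 0) ` {..<nc}"
    using dims[of 0] by (auto simp: cols_def)
  then obtain J where J: "J \<subseteq> {..<nc}" "inj_on (col (A 0)) J" "S = col (A 0) ` J"
    using Ssub subset_image_inj by metis
  define R where "R = card S"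
  define js where "js = sorted_list_of_set J"
  have finJ: "finite J" using J(1) finite_subset by blast
  have js: "distinct js" "set js = J" "length js = R"
    using finJ J(2,3) by (auto simp: js_def R_def card_image)
  have jsnc: "k < R \<Longrightarrow> js ! k < nc" for k using js J(1) nth_mem by fastforce
  define B where "B t = mat nr R (\<lambda>(p,k). A t $$ (p, js ! k))" for t
  have Bc: "B t \<in> carrier_mat nr R" for t by (simp add: B_def)
  have colB: "k < R \<Longrightarrow> col (B t) k = col (A t) (js ! k)" for t k
    using dims[of t] jsnc[of k] by (intro eq_vecI) (auto simp: B_def)
  have colsB: "cols (B t) = map (\<lambda>j. col (A t) j) js" for t
    using js(3) colB by (intro nth_equalityI) (auto simp: B_def)
  have setB0: "set (cols (B 0)) = S" using colsB[of 0] js(2) J(3) by simp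
  have distB0: "distinct (cols (B 0))" using colsB[of 0] js(1,2) J(2) by (simp add: distinct_map)
  have subB: "set (cols (B t)) \<subseteq> set (cols (A t))" for t
    using colsB[of t] js(2) J(1) dims[of t] by (auto simp: cols_def)
  define G where "G t = mat R R (\<lambda>(k,l). \<Sum>p<nr. B t $$ (p,k) * B t $$ (p,l))" for t
  have Gc: "G t \<in> carrier_mat R R" for t by (simp add: G_def)
  have BG: "v \<in> carrier_vec R \<Longrightarrow> B t *\<^sub>v v = 0\<^sub>v nr \<longleftrightarrow> G t *\<^sub>v v = 0\<^sub>v R" for t v
    unfolding G_def by (rule gram_facts[OF Bc])
  have detG0: "det (G 0) \<noteq> 0"
  proof
    assume "det (G 0) = 0"
    then obtain v where v: "v \<in> carrier_vec R" "v \<noteq> 0\<^sub>v R" "G 0 *\<^sub>v v = 0\<^sub>v R"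
      using det_0_iff_vec_prod_zero_field[OF Gc[of 0]] by blast
    then have "B 0 *\<^sub>v v = 0\<^sub>v nr" using BG by blast
    then have "V.lin_dep (set (cols (B 0)))" using V.lin_depI[OF Bc v(1,2) _ distB0] by blast
    then show False using Sli setB0 by simp
  qed
  have good: "V.rank (A t) \<ge> R" if dt: "det (G t) \<noteq> 0" for t
  proof -
    have inj: "v = 0\<^sub>v R" if "v \<in> carrier_vec R" "B t *\<^sub>v v = 0\<^sub>v nr" for v
      using that dt det_0_iff_vec_prod_zero_field[OF Gc[of t]] BG by blast
    have dist: "distinct (cols (B t))"
    proof (rule ccontr)
      assume "\<not> distinct (cols (B t))"
      then obtain k l where kl: "k \<noteq> l" "k < R" "l < R" "cols (B t) ! k = cols (B t) ! l"
        using Bc[of t] by (auto simp: distinct_conv_nth)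
      define v where "v = vec R (\<lambda>j. if j = k then 1 else if j = l then -1 else (0::real))"
      have vc: "v \<in> carrier_vec R" by (simp add: v_def)
      have ckl: "B t $$ (p,k) = B t $$ (p,l)" if "p < nr" for p
      proof -
        have "col (B t) k $ p = col (B t) l $ p" using kl Bc[of t] by simp
        then show ?thesis using kl that Bc[of t] by simp
      qed
      have "B t *\<^sub>v v = 0\<^sub>v nr"
      proof (rule eq_vecI)
        fix p assume "p < dim_vec (0\<^sub>v nr :: real vec)"
        then have p: "p < nr" by simp
        have "(B t *\<^sub>v v) $ p = (\<Sum>j<R. B t $$ (p,j) * v $ j)" using multvec_idx[OF Bc vc p] .
        also have "\<dots> = (\<Sum>j<R. (if j = k then B t $$ (p,k) else 0) - (if j = l then B t $$ (p,l) else 0))"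
          using kl by (intro sum.cong refl) (auto simp: v_def)
        also have "\<dots> = 0" using kl ckl[OF p] by (simp add: sum_subtractf)
        finally show "(B t *\<^sub>v v) $ p = 0\<^sub>v nr $ p" using p by simp
      qed (simp add: B_def)
      moreover have "v \<noteq> 0\<^sub>v R"
      proof
        assume "v = 0\<^sub>v R"
        then have "v $ k = 0" using kl by simp
        then show False using kl by (simp add: v_def)
      qed
      ultimately show False using inj vc by blast
    qed
    have li: "V.lin_indpt (set (cols (B t)))"
    proof
      assume "V.lin_dep (set (cols (B t)))"
      then obtain v where "v \<in> carrier_vec R" "v \<noteq> 0\<^sub>v R" "B t *\<^sub>v v = 0\<^sub>v nr"
        using V.lin_depE[OF Bc _ dist] by blast
      then show False using inj by blast
    qed
    have "card (set (cols (B t))) = R" using distinct_card[OF dist] Bc[of t] by simp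
    then show ?thesis using V.rank_ge_card_indpt[OF dims subB li] by simp
  qed
  have contG: "isCont (\<lambda>t. det (G t)) 0"
  proof -
    have eq: "det (G t) = (\<Sum>\<pi>\<in>{\<pi>. \<pi> permutes {0..<R}}. signof \<pi> *
        (\<Prod>i=0..<R. \<Sum>p<nr. A t $$ (p, js ! i) * A t $$ (p, js ! (\<pi> i))))" for t
      unfolding det_def'[OF Gc[of t]]
    proof (intro sum.cong refl arg_cong2[where f="(*)"] prod.cong)
      fix \<pi> i assume \<pi>: "\<pi> \<in> {\<pi>. \<pi> permutes {0..<R}}" and i: "i \<in> {0..<R}"
      have "\<pi> i < R" using \<pi> i permutes_in_image by fastforce
      then show "G t $$ (i, \<pi> i) = (\<Sum>p<nr. A t $$ (p, js ! i) * A t $$ (p, js ! (\<pi> i)))"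
        using i by (simp add: G_def B_def)
    qed
    have "isCont (\<lambda>t. (\<Sum>\<pi>\<in>{\<pi>. \<pi> permutes {0..<R}}. signof \<pi> *
        (\<Prod>i=0..<R. \<Sum>p<nr. A t $$ (p, js ! i) * A t $$ (p, js ! (\<pi> i))))) 0"
    proof (intro continuous_intros)
      fix \<pi> i p assume \<pi>: "\<pi> \<in> {\<pi>. \<pi> permutes {0..<R}}" and i: "i \<in> {0..<R}" and p: "p \<in> {..<nr}"
      have "\<pi> i < R" using \<pi> i permutes_in_image by fastforce
      then show "isCont (\<lambda>t. A t $$ (p, js ! i)) 0" "isCont (\<lambda>t. A t $$ (p, js ! (\<pi> i))) 0"
        using cont jsnc i p by auto
    qed
    then show ?thesis unfolding eq .
  qed
  obtain \<epsilon> where \<epsilon>: "\<epsilon> > 0" "\<forall>t. dist 0 t < \<epsilon> \<longrightarrow> det (G t) \<noteq> 0"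
    using continuous_at_avoid[OF contG detG0] by blast
  show ?thesis
  proof (intro exI[of _ \<epsilon>] conjI allI impI)
    fix t :: real assume "\<bar>t\<bar> < \<epsilon>"
    then have "det (G t) \<noteq> 0" using \<epsilon> by (simp add: dist_real_def)
    then show "vec_space.rank nr (A 0) \<le> vec_space.rank nr (A t)" using good rank0 R_def by simp
  qed (rule \<epsilon>(1))
qed


lemma rank_sum_rank1:
  fixes f g :: "nat \<Rightarrow> nat \<Rightarrow> real"
  shows "vec_space.rank nr (mat nr nc (\<lambda>(p,q). \<Sum>a<m. f a p * g a q)) \<le> m"
proof (induction m)
  case 0
  have "mat nr nc (\<lambda>(p,q). \<Sum>a<0. f a p * g a q) = (0\<^sub>m nr nc :: real mat)"
    by (intro eq_matI) auto
  then show ?case by (simp only: vec_space.rank_0I le_refl)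
next
  case (Suc m)
  have eq: "mat nr nc (\<lambda>(p,q). \<Sum>a<Suc m. f a p * g a q) =
     mat nr nc (\<lambda>(p,q). \<Sum>a<m. f a p * g a q) + mat nr nc (\<lambda>(p,q). f m p * g m q)"
    by (intro eq_matI) auto
  have "vec_space.rank nr (mat nr nc (\<lambda>(p,q). \<Sum>a<Suc m. f a p * g a q)) \<le>
     vec_space.rank nr (mat nr nc (\<lambda>(p,q). \<Sum>a<m. f a p * g a q)) + vec_space.rank nr (mat nr nc (\<lambda>(p,q). f m p * g m q))"
    unfolding eq by (rule vec_space.rank_subadditive) auto
  moreover have "vec_space.rank nr (mat nr nc (\<lambda>(p,q). f m p * g m q)) \<le> 1"
    by (rule vec_space.rank_le_1_product_entries[where f="f m" and g="g m"]) auto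
  ultimately show ?case using Suc.IH by simp
qed

fun RP :: "(nat \<Rightarrow> nat) \<Rightarrow> (nat \<Rightarrow> core) \<Rightarrow> nat \<Rightarrow> nat \<Rightarrow> (nat \<Rightarrow> nat) \<Rightarrow> nat \<Rightarrow> nat \<Rightarrow> real" where
  "RP r W \<mu> 0 i a b = (if a = b then 1 else 0)"
| "RP r W \<mu> (Suc m) i a b = (\<Sum>c<r (\<mu>+m). RP r W \<mu> m i a c * W (Suc (\<mu>+m)) c (i (Suc (\<mu>+m))) b)"

lemma pp_split: "b < r (\<mu>+m) \<Longrightarrow> partial_prod r W (\<mu>+m) i b = (\<Sum>a<r \<mu>. partial_prod r W \<mu> i a * RP r W \<mu> m i a b)"
proof (induction m arbitrary: b)
  case 0 then show ?case by (simp add: if_distrib cong: if_cong)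
next
  case (Suc m)
  have "partial_prod r W (\<mu> + Suc m) i b = (\<Sum>c<r (\<mu>+m). partial_prod r W (\<mu>+m) i c * W (Suc (\<mu>+m)) c (i (Suc (\<mu>+m))) b)"
    by simp
  also have "\<dots> = (\<Sum>c<r (\<mu>+m). (\<Sum>a<r \<mu>. partial_prod r W \<mu> i a * RP r W \<mu> m i a c) * W (Suc (\<mu>+m)) c (i (Suc (\<mu>+m))) b)"
    using Suc.IH by simp
  also have "\<dots> = (\<Sum>a<r \<mu>. partial_prod r W \<mu> i a * RP r W \<mu> (Suc m) i a b)"
    by (simp add: sum_distrib_left sum_distrib_right mult.assoc) (rule sum.swap)
  finally show ?case .
qed

lemma pp_cong_i: "(\<forall>k. 1 \<le> k \<and> k \<le> m \<longrightarrow> i k = i' k) \<Longrightarrow> partial_prod r W m i b = partial_prod r W m i' b"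
proof (induction m arbitrary: b)
  case 0 then show ?case by simp
next
  case (Suc m) then show ?case by (auto intro!: sum.cong)
qed

lemma RP_cong_i: "(\<forall>k. \<mu> < k \<and> k \<le> \<mu>+m \<longrightarrow> i k = i' k) \<Longrightarrow> RP r W \<mu> m i a b = RP r W \<mu> m i' a b"
proof (induction m arbitrary: b)
  case 0 then show ?case by simp
next
  case (Suc m) then show ?case by (auto intro!: sum.cong)
qed

lemma rank_upper:
  assumes mu: "1 \<le> \<mu>" "\<mu> < d" and rd: "r d = 1"
  shows "mat_rank (flattening d n \<mu> (M_TT d r W)) \<le> r \<mu>"
proof -
  define N1 where "N1 = (\<Prod>j\<in>{1..\<mu>}. n j)"
  define N2 where "N2 = (\<Prod>j\<in>{\<mu>+1..d}. n j)"
  define f where "f a p = partial_prod r W \<mu> (colex_index n \<mu> p 0) a" for a p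
  define g where "g a q = RP r W \<mu> (d-\<mu>) (colex_index n \<mu> 0 q) a 0" for a q
  have "M_TT d r W (colex_index n \<mu> p q) = (\<Sum>a<r \<mu>. f a p * g a q)" for p q
  proof -
    have "M_TT d r W (colex_index n \<mu> p q) = partial_prod r W (\<mu> + (d-\<mu>)) (colex_index n \<mu> p q) 0"
      using mu by (simp add: M_TT_def)
    also have "\<dots> = (\<Sum>a<r \<mu>. partial_prod r W \<mu> (colex_index n \<mu> p q) a * RP r W \<mu> (d-\<mu>) (colex_index n \<mu> p q) a 0)"
      using mu rd by (intro pp_split) simp
    also have "\<dots> = (\<Sum>a<r \<mu>. f a p * g a q)"
    proof (intro sum.cong refl arg_cong2[where f="(*)"])
      fix a
      show "partial_prod r W \<mu> (colex_index n \<mu> p q) a = f a p"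
        unfolding f_def by (rule pp_cong_i) (auto simp: colex_index_def)
      show "RP r W \<mu> (d-\<mu>) (colex_index n \<mu> p q) a 0 = g a q"
        unfolding g_def by (rule RP_cong_i) (auto simp: colex_index_def)
    qed
    finally show ?thesis .
  qed
  then have "flattening d n \<mu> (M_TT d r W) = mat N1 N2 (\<lambda>(p,q). \<Sum>a<r \<mu>. f a p * g a q)"
    unfolding flattening_def N1_def N2_def by (intro eq_matI) auto
  then show ?thesis unfolding mat_rank_def using rank_sum_rank1 by (simp add: N1_def)
qed



lemma smooth_isCont: "smooth f \<Longrightarrow> isCont f x"
  using smooth_deriv DERIV_isCont by blast

lemma pp_isCont:
  fixes C :: "nat \<Rightarrow> real \<Rightarrow> core"
  assumes "\<And>k \<alpha> j b. isCont (\<lambda>t. C k t \<alpha> j b) x"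
  shows "isCont (\<lambda>t. partial_prod r (\<lambda>k. C k t) m i b) x"
proof (induction m arbitrary: b)
  case 0 then show ?case by simp
next
  case (Suc m)
  have "isCont (\<lambda>t. \<Sum>a<r m. partial_prod r (\<lambda>k. C k t) m i a * C (Suc m) t a (i (Suc m)) b) x"
    using Suc assms by (intro continuous_intros) auto
  then show ?case by simp
qed

definition cf :: "(nat \<Rightarrow> core) \<Rightarrow> (nat \<Rightarrow> core) \<Rightarrow> nat \<Rightarrow> (nat \<Rightarrow> nat) \<Rightarrow> (nat \<Rightarrow> nat) \<Rightarrow> nat \<Rightarrow> real \<Rightarrow> core" where
  "cf U dV d r n k t = (if 1 \<le> k \<and> k < d then cc (dV k) (U k) (r (k-1)) (n k) (r k) t
      else (\<lambda>\<alpha> i b. U k \<alpha> i b + t * dV k \<alpha> i b))"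

lemma cf_smooth: "smooth (\<lambda>t. cf U dV d r n k t \<alpha> i b)"
proof (cases "1 \<le> k \<and> k < d")
  case True then show ?thesis by (simp add: cf_def cc_smooth)
next
  case False
  have "smooth (\<lambda>t. U k \<alpha> i b + t * dV k \<alpha> i b)" by (intro smooth_add smooth_mult) auto
  moreover have "(\<lambda>t. cf U dV d r n k t \<alpha> i b) = (\<lambda>t. U k \<alpha> i b + t * dV k \<alpha> i b)"
    using False unfolding cf_def by auto
  ultimately show ?thesis by simp
qed

lemma lin_deriv: "((\<lambda>t. a + t * c) has_real_derivative c) (at x)"
  using DERIV_add[OF DERIV_const DERIV_cmult_right[OF DERIV_ident]] by simp

lemma cf_zero: "cf U dV d r n k 0 = U k"
  by (auto simp: cf_def cc_zero)

lemma cf_O2: "1 \<le> k \<Longrightarrow> k < d \<Longrightarrow>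
   (\<lambda>t. cf U dV d r n k t \<alpha> i b - U k \<alpha> i b - t * dV k \<alpha> i b) \<in> O[at 0](\<lambda>t. t\<^sup>2)"
  by (simp add: cf_def cc_O2)

lemma cf_deriv: "((\<lambda>t. cf U dV d r n k t \<alpha> i b) has_real_derivative dV k \<alpha> i b) (at 0)"
proof (cases "1 \<le> k \<and> k < d")
  case True
  let ?E = "\<lambda>t. cf U dV d r n k t \<alpha> i b - U k \<alpha> i b - t * dV k \<alpha> i b"
  have "(?E has_real_derivative 0) (at 0)"
    using True by (intro O2_deriv0 cf_O2) (auto simp: cf_zero)
  moreover have h2: "((\<lambda>t. t * dV k \<alpha> i b) has_real_derivative dV k \<alpha> i b) (at 0)"
    using lin_deriv[of 0] by simp
  ultimately have "((\<lambda>t. ?E t + U k \<alpha> i b + t * dV k \<alpha> i b) has_real_derivative 0 + 0 + dV k \<alpha> i b) (at 0)"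
    by (intro DERIV_add DERIV_const)
  then show ?thesis by simp
next
  case False
  have "((\<lambda>t. U k \<alpha> i b + t * dV k \<alpha> i b) has_real_derivative dV k \<alpha> i b) (at 0)"
    by (rule lin_deriv)
  moreover have "(\<lambda>t. cf U dV d r n k t \<alpha> i b) = (\<lambda>t. U k \<alpha> i b + t * dV k \<alpha> i b)"
    using False unfolding cf_def by auto
  ultimately show ?thesis by simp
qed

theorem lemma14:
  fixes d :: nat and n r :: "nat \<Rightarrow> nat" and U dV :: "nat \<Rightarrow> core" and X V :: tensor
  assumes d: "d \<ge> 2"
    and n_pos: "\<forall>k\<in>{1..d}. n k > 0"
    and r0: "r 0 = 1" and rd: "r d = 1"
    and X_def: "X = M_TT d r U"
    and X_in: "X \<in> TT_manifold d n r"
    and U_min: "minimal_TT d n r U"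
    and U_lo: "left_orthogonal d n r U"
    and gauge: "\<forall>k\<in>{1..<d}. gauge_core n r k (dV k) (U k)"
    and V_def: "V = TT_tangent d r U dV"
  shows "\<exists>\<epsilon>>0. \<exists>c :: nat \<Rightarrow> real \<Rightarrow> core.
     (\<forall>k\<in>{1..d}. smooth_core_curve n r k {-\<epsilon><..<\<epsilon>} (c k))
   \<and> (\<forall>k\<in>{1..<d}. \<forall>a<r (k-1). \<forall>i<n k. \<forall>b<r k.
        (\<lambda>t. c k t a i b - U k a i b - t * dV k a i b) \<in> O[at 0](\<lambda>t. t\<^sup>2))
   \<and> (\<forall>t\<in>{-\<epsilon><..<\<epsilon>}. \<forall>a<r (d-1). \<forall>i<n d. \<forall>b<r d.
        c d t a i b = U d a i b + t * dV d a i b)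
   \<and> (\<forall>i. valid_index d n i \<longrightarrow> M_TT d r (\<lambda>k. c k 0) i = X i)
   \<and> (\<forall>i. valid_index d n i \<longrightarrow>
        ((\<lambda>t. M_TT d r (\<lambda>k. c k t) i) has_real_derivative V i) (at 0))
   \<and> (\<forall>t\<in>{-\<epsilon><..<\<epsilon>}.
        minimal_TT d n r (\<lambda>k. c k t) \<and> left_orthogonal d n r (\<lambda>k. c k t)
      \<and> M_TT d r (\<lambda>k. c k t) \<in> TT_manifold d n r)"

proof -
  define c where "c = cf U dV d r n"
  have c0: "(\<lambda>k. c k 0) = U" by (auto simp: c_def cf_zero)
  have Mc0: "M_TT d r (\<lambda>k. c k 0) = X" using c0 X_def by simp
  have rank_le: "mat_rank (flattening d n \<mu> (M_TT d r (\<lambda>k. c k t))) \<le> r \<mu>" if "\<mu> \<in> {1..<d}" for \<mu> t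
    using rank_upper[of \<mu> d r n "\<lambda>k. c k t"] that rd by simp
  have loc: "\<exists>e>0. \<forall>t. \<bar>t\<bar> < e \<longrightarrow> mat_rank (flattening d n \<mu> (M_TT d r (\<lambda>k. c k t))) = r \<mu>"
    if mu: "\<mu> \<in> {1..<d}" for \<mu>
  proof -
    define N1 where "N1 = (\<Prod>j\<in>{1..\<mu>}. n j)"
    define N2 where "N2 = (\<Prod>j\<in>{\<mu>+1..d}. n j)"
    define A where "A t = flattening d n \<mu> (M_TT d r (\<lambda>k. c k t))" for t
    have dims: "A t \<in> carrier_mat N1 N2" for t by (simp add: A_def flattening_def N1_def N2_def)
    have cont: "isCont (\<lambda>t. A t $$ (p,q)) 0" if "p < N1" "q < N2" for p q
    proof -
      have "isCont (\<lambda>t. M_TT d r (\<lambda>k. c k t) (colex_index n \<mu> p q)) 0"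
        unfolding M_TT_def c_def by (intro pp_isCont smooth_isCont cf_smooth)
      then show ?thesis using that by (simp add: A_def flattening_def N1_def N2_def)
    qed
    obtain e where e: "e > 0" "\<forall>t. \<bar>t\<bar> < e \<longrightarrow> vec_space.rank N1 (A 0) \<le> vec_space.rank N1 (A t)"
      using rank_lsc[OF dims cont] by blast
    have r0: "vec_space.rank N1 (A 0) = r \<mu>"
      using X_in mu Mc0 unfolding TT_manifold_def has_TT_rank_def mat_rank_def
      by (simp add: A_def flattening_def N1_def)
    have "mat_rank (A t) = vec_space.rank N1 (A t)" for t
      by (simp add: mat_rank_def A_def flattening_def N1_def)
    then show ?thesis using e r0 rank_le[OF mu] by (intro exI[of _ e]) (auto simp: A_def intro: antisym)
  qed
  then obtain e where e: "\<And>\<mu>. \<mu> \<in> {1..<d} \<Longrightarrow> e \<mu> > 0 \<and> (\<forall>t. \<bar>t\<bar> < e \<mu> \<longrightarrow> mat_rank (flattening d n \<mu> (M_TT d r (\<lambda>k. c k t))) = r \<mu>)"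
    by metis
  define \<epsilon> where "\<epsilon> = Min (e ` {1..<d})"
  have ne: "{1..<d} \<noteq> {}" using d by auto
  have eps: "\<epsilon> > 0" unfolding \<epsilon>_def using e ne by (subst Min_gr_iff) auto
  have eps_le: "\<mu> \<in> {1..<d} \<Longrightarrow> \<epsilon> \<le> e \<mu>" for \<mu> unfolding \<epsilon>_def by simp
  have rk: "has_TT_rank d n r (M_TT d r (\<lambda>k. c k t))" if "\<bar>t\<bar> < \<epsilon>" for t
    unfolding has_TT_rank_def using e eps_le that by (meson less_le_trans)
  show ?thesis
  proof (intro exI[of _ \<epsilon>] conjI exI[of _ c] ballI allI impI)
    show "0 < \<epsilon>" by (rule eps)
  next
    fix k assume "k \<in> {1..d}"
    show "smooth_core_curve n r k {-\<epsilon><..<\<epsilon>} (c k)"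
      unfolding smooth_core_curve_def c_def using cf_smooth smooth_imp_smooth_on_real by blast
  next
    fix k \<alpha> i b assume "k \<in> {1..<d}"
    then show "(\<lambda>t. c k t \<alpha> i b - U k \<alpha> i b - t * dV k \<alpha> i b) \<in> O[at 0](\<lambda>t. t\<^sup>2)"
      unfolding c_def by (intro cf_O2) auto
  next
    fix t \<alpha> i b
    show "c d t \<alpha> i b = U d \<alpha> i b + t * dV d \<alpha> i b" by (simp add: c_def cf_def)
  next
    fix i
    show "M_TT d r (\<lambda>k. c k 0) i = X i" using Mc0 by simp
  next
    fix i
    have "((\<lambda>t. partial_prod r (\<lambda>l. c l t) d i 0) has_real_derivative
            (\<Sum>l\<in>{1..d}. partial_prod r (U(l := dV l)) d i 0)) (at 0)"
      by (rule pp_deriv) (auto simp: c_def cf_zero cf_deriv)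
    then show "((\<lambda>t. M_TT d r (\<lambda>k. c k t) i) has_real_derivative V i) (at 0)"
      by (simp add: M_TT_def V_def TT_tangent_def)
  next
    fix t :: real assume t: "t \<in> {-\<epsilon><..<\<epsilon>}"
    then have "\<bar>t\<bar> < \<epsilon>" by auto
    then show "minimal_TT d n r (\<lambda>k. c k t)" "M_TT d r (\<lambda>k. c k t) \<in> TT_manifold d n r"
      using rk by (auto simp: minimal_TT_def TT_manifold_def)
    show "left_orthogonal d n r (\<lambda>k. c k t)"
      unfolding left_orthogonal_def
    proof
      fix k assume k: "k \<in> {1..<d}"
      have orth: "\<forall>b<r k. \<forall>b'<r k. (\<Sum>\<alpha><r (k-1). \<Sum>i<n k. U k \<alpha> i b * U k \<alpha> i b') = (if b = b' then 1 else 0)"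
        using U_lo k unfolding left_orthogonal_def left_orth_core_def by blast
      have g: "\<forall>b<r k. \<forall>b'<r k. (\<Sum>\<alpha><r (k-1). \<Sum>i<n k. dV k \<alpha> i b * U k \<alpha> i b') = 0"
        using gauge k unfolding gauge_core_def by blast
      show "left_orth_core n r k (c k t)"
        using cc_orth[OF orth g, of t] k unfolding left_orth_core_def c_def cf_def by auto
    qed
  qed
qed

end
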